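(* Let $p,q\in(0,1)$ and $N\ge1$. For all $x,y\in\mathbb{N}$ with $\min(x,y)\ge N$, $$\mathbb{P}^{(x,y)}_{p,q}(\tau<+\infty)\le\mathbb{P}^{(1,1)}_{p,q}(\tau<+\infty)^N.$$
   Context: Cooperative model: for $p,q\in(0,1)$, a Markov chain $(X_n,Y_n)_{n\ge0}$ on $\mathbb{N}^2$ whose transition law from state $(x,y)$ is $\mu_{(x,y)}=\mathrm{Bin}(2,q)^{*(x+y)}\otimes\mathrm{Bin}(2,p)^{*\min(x,y)}$, i.e. given the past, $X_{n+1}\sim\mathrm{Bin}(2(X_n+Y_n),q)$ and $Y_{n+1}\sim\mathrm{Bin}(2\min(X_n,Y_n),p)$ are independent. $\mathbb{P}^{(x,y)}_{p,q}$ denotes the law of this process started from $(x,y)$. $Z_n=\min(X_n,Y_n)$ and $\tau=\inf\{n\ge0: Z_n=0\}$. *)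

theory Defs
  imports "HOL-Probability.Probability"
begin

definition coop_trans :: "real \<Rightarrow> real \<Rightarrow> nat \<times> nat \<Rightarrow> (nat \<times> nat) pmf" where
  "coop_trans p q s =
     pair_pmf (binomial_pmf (2 * (fst s + snd s)) q) (binomial_pmf (2 * min (fst s) (snd s)) p)"

fun coop_path :: "real \<Rightarrow> real \<Rightarrow> nat \<Rightarrow> nat \<times> nat \<Rightarrow> (nat \<times> nat) list pmf" where
  "coop_path p q 0 s = return_pmf [s]"
| "coop_path p q (Suc n) s =
     bind_pmf (coop_trans p q s) (\<lambda>t. map_pmf (Cons s) (coop_path p q n t))"

text \<open>P^{s}(tau \<le> n): some state among the first n+1 has min(X,Y) = 0.\<close>
definition coop_tau_le :: "real \<Rightarrow> real \<Rightarrow> nat \<times> nat \<Rightarrow> nat \<Rightarrow> real" where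
  "coop_tau_le p q s n =
     measure_pmf.prob (coop_path p q n s) {xs. \<exists>z \<in> set xs. min (fst z) (snd z) = 0}"

text \<open>P^{s}(tau < \<infinity>) = sup_n P^{s}(tau \<le> n) (continuity from below).\<close>
definition coop_tau_finite :: "real \<Rightarrow> real \<Rightarrow> nat \<times> nat \<Rightarrow> real" where
  "coop_tau_finite p q s = (SUP n. coop_tau_le p q s n)"

end

theory Submission
  imports Defs
begin

lemma bin_conv:
  assumes "r \<in> {0..1}"
  shows "binomial_pmf (m + k) r = map_pmf (\<lambda>(u,v). u + v) (pair_pmf (binomial_pmf m r) (binomial_pmf k r))"
proof (induction m)
  case 0
  then show ?case using assms
    by (simp add: binomial_pmf_0 pair_return_pmf1 pmf.map_comp o_def)
next
  case (Suc m)
  show ?case using assms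
    apply (simp add: binomial_pmf_Suc Suc)
    apply (simp add: pair_pmf_def map_pmf_def bind_assoc_pmf bind_return_pmf add.assoc)
    done
qed

lemma nn_pmf_swap:
  "(\<integral>\<^sup>+x. \<integral>\<^sup>+y. f x y \<partial>measure_pmf B \<partial>measure_pmf A) = (\<integral>\<^sup>+y. \<integral>\<^sup>+x. f x y \<partial>measure_pmf A \<partial>measure_pmf B)"
proof -
  have "(\<integral>\<^sup>+x. \<integral>\<^sup>+y. f x y \<partial>measure_pmf B \<partial>measure_pmf A) = (\<integral>\<^sup>+z. f (fst z) (snd z) \<partial>pair_pmf A B)"
    by (simp add: nn_integral_pair_pmf')
  also have "\<dots> = (\<integral>\<^sup>+z. f (snd z) (fst z) \<partial>pair_pmf B A)"
    by (subst pair_commute_pmf) (simp add: case_prod_beta)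
  also have "\<dots> = (\<integral>\<^sup>+y. \<integral>\<^sup>+x. f x y \<partial>measure_pmf A \<partial>measure_pmf B)"
    by (simp add: nn_integral_pair_pmf')
  finally show ?thesis .
qed

lemma nn_bin_conv:
  assumes "r \<in> {0..1}"
  shows "(\<integral>\<^sup>+x. g x \<partial>binomial_pmf (m + k) r) = (\<integral>\<^sup>+u. \<integral>\<^sup>+v. g (u+v) \<partial>binomial_pmf k r \<partial>binomial_pmf m r)"
  by (simp add: bin_conv[OF assms] nn_integral_pair_pmf')


lemma dom:
  fixes h :: "nat \<times> nat \<Rightarrow> ennreal"
  assumes anti: "\<And>u v. fst u \<le> fst v \<Longrightarrow> snd u \<le> snd v \<Longrightarrow> h v \<le> h u"
    and p: "p \<in> {0..1}" and q: "q \<in> {0..1}" and ha: "a1 + a2 \<le> a" and hb: "b1 + b2 \<le> b"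
  shows "(\<integral>\<^sup>+t. h t \<partial>pair_pmf (binomial_pmf a q) (binomial_pmf b p)) \<le>
    (\<integral>\<^sup>+t1. \<integral>\<^sup>+t2. h (fst t1 + fst t2, snd t1 + snd t2) \<partial>pair_pmf (binomial_pmf a2 q) (binomial_pmf b2 p)
       \<partial>pair_pmf (binomial_pmf a1 q) (binomial_pmf b1 p))"
proof -
  obtain a3 where a: "a = (a1 + a2) + a3" using ha le_Suc_ex by blast
  obtain b3 where b: "b = (b1 + b2) + b3" using hb le_Suc_ex by blast
  have "(\<integral>\<^sup>+t. h t \<partial>pair_pmf (binomial_pmf a q) (binomial_pmf b p))
      = (\<integral>\<^sup>+x. \<integral>\<^sup>+y. h (x, y) \<partial>binomial_pmf b p \<partial>binomial_pmf a q)"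
    by (simp add: nn_integral_pair_pmf')
  also have "\<dots> = (\<integral>\<^sup>+x. \<integral>\<^sup>+x3. \<integral>\<^sup>+y. \<integral>\<^sup>+y3. h (x + x3, y + y3)
       \<partial>binomial_pmf b3 p \<partial>binomial_pmf (b1+b2) p \<partial>binomial_pmf a3 q \<partial>binomial_pmf (a1+a2) q)"
    unfolding a b by (simp add: nn_bin_conv[OF p] nn_bin_conv[OF q])
  also have "\<dots> \<le> (\<integral>\<^sup>+x. \<integral>\<^sup>+x3. \<integral>\<^sup>+y. \<integral>\<^sup>+y3. h (x, y)
       \<partial>binomial_pmf b3 p \<partial>binomial_pmf (b1+b2) p \<partial>binomial_pmf a3 q \<partial>binomial_pmf (a1+a2) q)"
    by (intro nn_integral_mono anti) auto
  also have "\<dots> = (\<integral>\<^sup>+x. \<integral>\<^sup>+y. h (x, y) \<partial>binomial_pmf (b1+b2) p \<partial>binomial_pmf (a1+a2) q)"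
    by (simp add: measure_pmf.emeasure_space_1)
  also have "\<dots> = (\<integral>\<^sup>+x1. \<integral>\<^sup>+x2. \<integral>\<^sup>+y1. \<integral>\<^sup>+y2. h (x1 + x2, y1 + y2)
       \<partial>binomial_pmf b2 p \<partial>binomial_pmf b1 p \<partial>binomial_pmf a2 q \<partial>binomial_pmf a1 q)"
    by (simp add: nn_bin_conv[OF p] nn_bin_conv[OF q])
  also have "\<dots> = (\<integral>\<^sup>+x1. \<integral>\<^sup>+y1. \<integral>\<^sup>+x2. \<integral>\<^sup>+y2. h (x1 + x2, y1 + y2)
       \<partial>binomial_pmf b2 p \<partial>binomial_pmf a2 q \<partial>binomial_pmf b1 p \<partial>binomial_pmf a1 q)"
    by (intro nn_integral_cong nn_pmf_swap)
  also have "\<dots> = (\<integral>\<^sup>+t1. \<integral>\<^sup>+t2. h (fst t1 + fst t2, snd t1 + snd t2) \<partial>pair_pmf (binomial_pmf a2 q) (binomial_pmf b2 p)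
       \<partial>pair_pmf (binomial_pmf a1 q) (binomial_pmf b1 p))"
    by (simp add: nn_integral_pair_pmf')
  finally show ?thesis .
qed


definition Ev :: "(nat \<times> nat) list set" where
  "Ev = {xs. \<exists>z \<in> set xs. min (fst z) (snd z) = 0}"

definition F :: "real \<Rightarrow> real \<Rightarrow> nat \<Rightarrow> nat \<times> nat \<Rightarrow> ennreal" where
  "F p q n s = emeasure (measure_pmf (coop_path p q n s)) Ev"

lemma F_0: "F p q 0 s = (if min (fst s) (snd s) = 0 then 1 else 0)"
  by (simp add: F_def Ev_def)

lemma F_Suc: "F p q (Suc n) s = (if min (fst s) (snd s) = 0 then 1 else (\<integral>\<^sup>+t. F p q n t \<partial>coop_trans p q s))"
proof -
  have pre: "Cons s -` Ev = (if min (fst s) (snd s) = 0 then UNIV else Ev)"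
    by (auto simp: Ev_def)
  show ?thesis
    by (cases "min (fst s) (snd s) = 0") (auto simp add: F_def pre measure_pmf.emeasure_space_1[simplified])
qed

lemma F_le1: "F p q n s \<le> 1"
  unfolding F_def by (rule measure_pmf.emeasure_le_1)

lemma F_one: "min (fst s) (snd s) = 0 \<Longrightarrow> F p q n s = 1"
  by (cases n) (simp_all add: F_0 F_Suc)

lemma int_le1: "(\<integral>\<^sup>+t. F p q n t \<partial>coop_trans p q s) \<le> 1"
proof -
  have "(\<integral>\<^sup>+t. F p q n t \<partial>coop_trans p q s) \<le> (\<integral>\<^sup>+t. 1 \<partial>coop_trans p q s)"
    by (intro nn_integral_mono F_le1)
  also have "\<dots> = 1" by (simp add: measure_pmf.emeasure_space_1)
  finally show ?thesis .
qed

lemma int_le_F: "(\<integral>\<^sup>+t. F p q n t \<partial>coop_trans p q s) \<le> F p q (Suc n) s"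
  using int_le1[where p=p and q=q and n=n and s=s] by (simp add: F_Suc)

lemma main_ind:
  assumes p: "p \<in> {0..1}" and q: "q \<in> {0..1}"
  shows "\<forall>s s1 s2. fst s1 + fst s2 \<le> fst s \<and> snd s1 + snd s2 \<le> snd s \<longrightarrow> F p q n s \<le> F p q n s1 * F p q n s2"
proof (induction n)
  case 0
  show ?case
  proof (intro allI impI)
    fix s s1 s2 :: "nat \<times> nat"
    assume h: "fst s1 + fst s2 \<le> fst s \<and> snd s1 + snd s2 \<le> snd s"
    show "F p q 0 s \<le> F p q 0 s1 * F p q 0 s2"
    proof (cases "min (fst s) (snd s) = 0")
      case True
      then have "min (fst s1) (snd s1) = 0" "min (fst s2) (snd s2) = 0" using h by auto
      then show ?thesis using True by (simp add: F_0)
    next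
      case False
      then show ?thesis by (simp add: F_0)
    qed
  qed
next
  case (Suc n)
  have F00: "F p q n (0,0) = 1" by (simp add: F_one)
  have mono: "F p q n v \<le> F p q n u" if "fst u \<le> fst v" "snd u \<le> snd v" for u v
    using spec[OF spec[OF spec[OF Suc.IH, of v], of u], of "(0,0)"] that by (simp add: F00)
  show ?case
  proof (intro allI impI)
    fix s s1 s2 :: "nat \<times> nat"
    assume h: "fst s1 + fst s2 \<le> fst s \<and> snd s1 + snd s2 \<le> snd s"
    show "F p q (Suc n) s \<le> F p q (Suc n) s1 * F p q (Suc n) s2"
    proof (cases "min (fst s) (snd s) = 0")
      case True
      then have "min (fst s1) (snd s1) = 0" "min (fst s2) (snd s2) = 0" using h by auto
      then show ?thesis using True by (simp add: F_one)
    next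
      case False
      have "F p q (Suc n) s = (\<integral>\<^sup>+t. F p q n t \<partial>coop_trans p q s)"
        by (subst F_Suc) (rule if_not_P[OF False])
      also have "\<dots> \<le> (\<integral>\<^sup>+t1. \<integral>\<^sup>+t2. F p q n (fst t1 + fst t2, snd t1 + snd t2) \<partial>coop_trans p q s2
          \<partial>coop_trans p q s1)"
        unfolding coop_trans_def
        by (rule dom[OF mono p q]) (use h in auto)
      also have "\<dots> \<le> (\<integral>\<^sup>+t1. \<integral>\<^sup>+t2. F p q n t1 * F p q n t2 \<partial>coop_trans p q s2
          \<partial>coop_trans p q s1)"
        by (intro nn_integral_mono Suc.IH[rule_format]) auto
      also have "\<dots> = (\<integral>\<^sup>+t1. F p q n t1 \<partial>coop_trans p q s1) * (\<integral>\<^sup>+t2. F p q n t2 \<partial>coop_trans p q s2)"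
        by (simp add: nn_integral_cmult nn_integral_multc)
      also have "\<dots> \<le> F p q (Suc n) s1 * F p q (Suc n) s2"
        by (intro mult_mono int_le_F) auto
      finally show ?thesis .
    qed
  qed
qed


lemma F_eq: "F p q n s = ennreal (coop_tau_le p q s n)"
  unfolding F_def coop_tau_le_def Ev_def by (simp add: measure_pmf.emeasure_eq_measure)

theorem mainTheorem11:
  fixes p q :: real and N x y :: nat
  assumes "0 < p" "p < 1" "0 < q" "q < 1" "N \<ge> 1" "min x y \<ge> N"
  shows "coop_tau_finite p q (x, y) \<le> coop_tau_finite p q (1, 1) ^ N"
proof -
  have p: "p \<in> {0..1}" and q: "q \<in> {0..1}" using assms by auto
  note MI = main_ind[OF p q]
  have kk: "F p q n (k,k) \<le> F p q n (1,1) ^ k" for n k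
  proof (induction k)
    case 0 then show ?case by (simp add: F_one)
  next
    case (Suc k)
    have "F p q n (Suc k, Suc k) \<le> F p q n (k,k) * F p q n (1,1)"
      using spec[OF spec[OF spec[OF MI, of "(Suc k, Suc k)"], of "(k,k)"], of "(1,1)"] by simp
    also have "\<dots> \<le> F p q n (1,1) ^ k * F p q n (1,1)"
      by (intro mult_right_mono Suc.IH) auto
    finally show ?case by (simp add: mult.commute)
  qed
  have le1: "coop_tau_le p q s n \<le> 1" for s n
    unfolding coop_tau_le_def by simp
  have ge0: "0 \<le> coop_tau_le p q s n" for s n
    unfolding coop_tau_le_def by simp
  have bdd: "bdd_above (range (coop_tau_le p q s))" for s
    by (rule bdd_aboveI[where M=1]) (use le1[of s] in auto)
  have each: "coop_tau_le p q (x,y) n \<le> coop_tau_le p q (1,1) n ^ N" for n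
  proof -
    have "F p q n (x,y) \<le> F p q n (N,N) * F p q n (0,0)"
      using spec[OF spec[OF spec[OF MI, of "(x,y)"], of "(N,N)"], of "(0,0)"] assms(6) by simp
    also have "\<dots> = F p q n (N,N)" by (simp add: F_one)
    also have "\<dots> \<le> F p q n (1,1) ^ N" by (rule kk)
    finally have "ennreal (coop_tau_le p q (x,y) n) \<le> ennreal (coop_tau_le p q (1,1) n ^ N)"
      by (simp add: F_eq ennreal_power ge0)
    then show ?thesis using ge0 by (simp add: ennreal_le_iff)
  qed
  have "coop_tau_le p q (x,y) n \<le> coop_tau_finite p q (1, 1) ^ N" for n
  proof -
    have "coop_tau_le p q (1,1) n \<le> coop_tau_finite p q (1, 1)"
      unfolding coop_tau_finite_def by (rule cSUP_upper[OF _ bdd]) simp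
    then have "coop_tau_le p q (1,1) n ^ N \<le> coop_tau_finite p q (1, 1) ^ N"
      by (intro power_mono ge0)
    then show ?thesis using each[of n] by linarith
  qed
  then show ?thesis unfolding coop_tau_finite_def by (intro cSUP_least) auto
qed

end
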